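(* Let $D\in\mathbb{R}^{n\times n}$, $\lambda,\mu>0$, and let $\mathcal V,\mathcal W\subseteq\mathbb{R}^{n\times n}$ be arbitrary subsets. For $X\in\mathbb{R}^{n\times n}$ and $c>0$ let $\mathcal U_c(X)=\{\Delta\in\mathbb{R}^{n\times n}:\|\Delta\|_F\le c\|X\|_F\}$. Then the robust optimization problem $$\min_{X\in\mathcal V,\,Y\in\mathcal W}\ \max_{\Delta_1\in\mathcal U_\lambda(X),\,\Delta_2\in\mathcal U_\mu(Y)}\ \|D+\Delta_1+\Delta_2-X-Y\|_F$$ is equivalent to the regularized problem $$\min_{X\in\mathcal V,\,Y\in\mathcal W}\ \|D-X-Y\|_F+\lambda\|X\|_F+\mu\|Y\|_F,$$ in the sense that they have the same optimal value and the same optimal solutions.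
   Context: $\|\cdot\|_F$ denotes the Frobenius norm. *)

theory Defs
  imports "HOL-Analysis.Analysis"
begin

definition frob :: "real^'n^'n \<Rightarrow> real" where
  "frob A = sqrt (\<Sum>i\<in>UNIV. \<Sum>j\<in>UNIV. (A $ i $ j)\<^sup>2)"

definition unc :: "real \<Rightarrow> real^'n^'n \<Rightarrow> (real^'n^'n) set" where
  "unc c X = {\<Delta>. frob \<Delta> \<le> c * frob X}"

text \<open>Robust objective: worst case over the uncertainty sets (the maximum is attained,
  so Sup is the max).\<close>
definition robust_obj :: "real^'n^'n \<Rightarrow> real \<Rightarrow> real \<Rightarrow> real^'n^'n \<Rightarrow> real^'n^'n \<Rightarrow> real" where
  "robust_obj D lam mu X Y =
     (SUP p \<in> unc lam X \<times> unc mu Y. frob (D + fst p + snd p - X - Y))"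

definition reg_obj :: "real^'n^'n \<Rightarrow> real \<Rightarrow> real \<Rightarrow> real^'n^'n \<Rightarrow> real^'n^'n \<Rightarrow> real" where
  "reg_obj D lam mu X Y = frob (D - X - Y) + lam * frob X + mu * frob Y"

end

theory Submission
  imports Defs
begin

lemma frob_norm: "frob A = norm A"
  unfolding frob_def norm_vec_def L2_set_def
  by (simp add: real_sqrt_pow2 sum_nonneg)

lemma robust_eq_reg:
  fixes D X Y :: "real^'n^'n"
  assumes "lam > 0" and "mu > 0"
  shows "robust_obj D lam mu X Y = reg_obj D lam mu X Y"
proof -
  define E where "E = D - X - Y"
  obtain u :: "real^'n^'n" where u: "norm u = 1" and uE: "E \<noteq> 0 \<Longrightarrow> u = E /\<^sub>R norm E"
  proof (cases "E = 0")
    case True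
    obtain b :: "real^'n^'n" where "b \<in> Basis" using nonempty_Basis by blast
    then show ?thesis using that[of b] True by simp
  next
    case False
    then show ?thesis using that[of "E /\<^sub>R norm E"] by simp
  qed
  define z where "z = norm E + lam * norm X + mu * norm Y"
  let ?S = "(\<lambda>p. frob (D + fst p + snd p - X - Y)) ` (unc lam X \<times> unc mu Y)"
  have mem: "z \<in> ?S"
  proof
    let ?p = "((lam * norm X) *\<^sub>R u, (mu * norm Y) *\<^sub>R u)"
    show "?p \<in> unc lam X \<times> unc mu Y"
      using assms u by (simp add: unc_def frob_norm)
    have "D + fst ?p + snd ?p - X - Y = E + (lam * norm X + mu * norm Y) *\<^sub>R u"
      by (simp add: E_def algebra_simps)
    also have "\<dots> = (norm E + lam * norm X + mu * norm Y) *\<^sub>R u"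
    proof (cases "E = 0")
      case True then show ?thesis by simp
    next
      case False then show ?thesis using uE by (simp add: algebra_simps)
    qed
    finally show "z = frob (D + fst ?p + snd ?p - X - Y)"
      using u assms by (simp add: frob_norm z_def)
  qed
  have ub: "\<forall>x\<in>?S. x \<le> z"
  proof
    fix x assume "x \<in> ?S"
    then obtain d1 d2 where d: "norm d1 \<le> lam * norm X" "norm d2 \<le> mu * norm Y"
      and x: "x = norm (E + d1 + d2)"
      by (auto simp: unc_def frob_norm E_def algebra_simps)
    have "norm (E + d1 + d2) \<le> norm E + norm d1 + norm d2"
      by (metis add_right_mono norm_triangle_ineq order_trans)
    then show "x \<le> z" using d x z_def by linarith
  qed
  have "robust_obj D lam mu X Y = z"
    unfolding robust_obj_def using cSup_eq_maximum[OF mem] ub by blast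
  then show ?thesis by (simp add: reg_obj_def frob_norm z_def E_def)
qed

theorem proposition3:
  fixes D :: "real^'n^'n" and lam mu :: real and V W :: "(real^'n^'n) set"
  assumes "lam > 0" and "mu > 0"
  shows "(INF p \<in> V \<times> W. robust_obj D lam mu (fst p) (snd p))
           = (INF p \<in> V \<times> W. reg_obj D lam mu (fst p) (snd p))
         \<and> (\<forall>X Y. (X \<in> V \<and> Y \<in> W \<and>
                     (\<forall>X'\<in>V. \<forall>Y'\<in>W. robust_obj D lam mu X Y \<le> robust_obj D lam mu X' Y'))
                  \<longleftrightarrow> (X \<in> V \<and> Y \<in> W \<and>
                     (\<forall>X'\<in>V. \<forall>Y'\<in>W. reg_obj D lam mu X Y \<le> reg_obj D lam mu X' Y')))"
proof -
  have e: "\<And>X Y. robust_obj D lam mu X Y = reg_obj D lam mu X Y"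
    using robust_eq_reg[OF assms] by blast
  show ?thesis unfolding e by simp
qed

end
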